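(* Let $r\ge1$ and let $\mathcal S_r\Lambda^1(I^2)=\mathcal P_r\Lambda^1(I^2)+\operatorname{span}\{d(x^{r+1}y),\,d(xy^{r+1})\}$. For an integer $s\ge1$, $\mathcal Q^-_s\Lambda^1(I^2)\subset\mathcal S_r\Lambda^1(I^2)$ if and only if $2s-1\le r$. Consequently (by Theorem 4 with $n=2$, $k=1$), the reference space $\mathcal S_r\Lambda^1(\hat K)$ yields $L^2$ approximation of order $h^{\lfloor (r+1)/2\rfloor}$ on meshes of bilinearly mapped quadrilaterals.
   Context: $I=[0,1]$, coordinates $(x,y)$ on $I^2=\hat K$. $\mathcal P_r\Lambda^1(I^2)$: $1$-forms $p\,dx+q\,dy$ with $p,q$ polynomials of total degree $\le r$. $\mathcal Q^-_s\Lambda^1(I^2)=\mathcal P_{s-1,s}\,dx\oplus\mathcal P_{s,s-1}\,dy$, where $\mathcal P_{a,b}$ is the space of polynomials of degree $\le a$ in $x$ and $\le b$ in $y$. Theorem 4 (case $n=2$, $k=1$): for $K=F_K(\hat K)$ with $F_K$ bilinear and $V(K)=(F_K^{-1})^*V(\hat K)$ (pullback of $1$-forms: $\hat v=DF_K^T(v\circ F_K)$ in vector proxy), if $\mathcal Q^-_s\Lambda^1(\hat K)\subset V(\hat K)$ then $\mathcal P_{s-1}\Lambda^1(K)\subset V(K)$ and $\inf_{v\in V(K)}\|u-v\|_{L^2\Lambda^1(K)}\le Ch_K^{s}|u|_{H^{s}\Lambda^1(K)}$. *)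

theory Defs
  imports Complex_Main
begin

text \<open>A 1-form p dx + q dy is represented by its
  vector proxy, the pair (p, q).\<close>

type_synonym form1 = "(real \<Rightarrow> real \<Rightarrow> real) \<times> (real \<Rightarrow> real \<Rightarrow> real)"

definition poly_tdeg :: "nat \<Rightarrow> (real \<Rightarrow> real \<Rightarrow> real) \<Rightarrow> bool" where
  "poly_tdeg r f \<longleftrightarrow> (\<exists>c :: nat \<Rightarrow> nat \<Rightarrow> real.
      \<forall>x y. f x y = (\<Sum>i\<le>r. \<Sum>j\<le>r - i. c i j * x ^ i * y ^ j))"

definition poly_bideg :: "nat \<Rightarrow> nat \<Rightarrow> (real \<Rightarrow> real \<Rightarrow> real) \<Rightarrow> bool" where
  "poly_bideg a b f \<longleftrightarrow> (\<exists>c :: nat \<Rightarrow> nat \<Rightarrow> real.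
      \<forall>x y. f x y = (\<Sum>i\<le>a. \<Sum>j\<le>b. c i j * x ^ i * y ^ j))"

definition P_forms :: "nat \<Rightarrow> form1 set" where
  "P_forms r = {(p, q). poly_tdeg r p \<and> poly_tdeg r q}"

definition Qminus_forms :: "nat \<Rightarrow> form1 set" where
  "Qminus_forms s = {(p, q). poly_bideg (s - 1) s p \<and> poly_bideg s (s - 1) q}"

text \<open>S_r Lambda^1(I^2) = P_r Lambda^1 + span{d(x^(r+1) y), d(x y^(r+1))}, where
  d(x^(r+1) y) = (r+1) x^r y dx + x^(r+1) dy and d(x y^(r+1)) = y^(r+1) dx + (r+1) x y^r dy.\<close>
definition S_forms :: "nat \<Rightarrow> form1 set" where
  "S_forms r = {(p, q). \<exists>a b :: real.
      (\<lambda>x y. p x y - a * (real r + 1) * x ^ r * y - b * y ^ (r + 1),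
       \<lambda>x y. q x y - a * x ^ (r + 1) - b * (real r + 1) * x * y ^ r) \<in> P_forms r}"

end

theory Submission
  imports Defs
begin

lemma pow_div_lim:
  assumes "k < m"
  shows "((\<lambda>t::real. t^k / t^m) \<longlongrightarrow> 0) at_top"
proof -
  have "((\<lambda>t::real. inverse (t^(m-k))) \<longlongrightarrow> 0) at_top"
    by (intro tendsto_inverse_0_at_top filterlim_pow_at_top filterlim_ident) (use assms in auto)
  moreover have "eventually (\<lambda>t::real. inverse (t^(m-k)) = t^k/t^m) at_top"
    using eventually_gt_at_top[of "0::real"]
  proof eventually_elim
    case (elim t)
    have "t^m = t^k * t^(m-k)" using assms by (simp add: power_add[symmetric])
    then show ?case using elim by (simp add: field_simps)
  qed
  ultimately show ?thesis by (rule Lim_transform_eventually)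
qed

lemma tdeg_lim:
  assumes "poly_tdeg r f" "r < m"
  shows "((\<lambda>t. f (u*t) (v*t) / t^m) \<longlongrightarrow> 0) at_top"
proof -
  obtain c where c: "\<forall>x y. f x y = (\<Sum>i\<le>r. \<Sum>j\<le>r - i. c i j * x ^ i * y ^ j)"
    using assms unfolding poly_tdeg_def by blast
  have "((\<lambda>t. \<Sum>i\<le>r. \<Sum>j\<le>r - i. c i j * u^i * v^j * (t^(i+j)/t^m)) \<longlongrightarrow> 0) at_top"
  proof (intro tendsto_null_sum)
    fix i j assume "i \<in> {..r}" "j \<in> {..r - i}"
    then have "i + j < m" using assms by auto
    then show "((\<lambda>t. c i j * u^i * v^j * (t^(i+j)/t^m)) \<longlongrightarrow> 0) at_top"
      by (intro tendsto_mult_right_zero pow_div_lim)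
  qed
  moreover have "(\<lambda>t. \<Sum>i\<le>r. \<Sum>j\<le>r - i. c i j * u^i * v^j * (t^(i+j)/t^m)) = (\<lambda>t. f (u*t) (v*t) / t^m)"
    by (rule ext) (simp add: c sum_divide_distrib power_mult_distrib power_add mult_ac)
  ultimately show ?thesis by simp
qed

lemma tdeg_const:
  assumes "poly_tdeg r f" "r < m" "\<And>t. f (u*t) (v*t) = K * t^m"
  shows "K = 0"
proof -
  have "((\<lambda>t. f (u*t) (v*t) / t^m) \<longlongrightarrow> 0) at_top" using tdeg_lim assms by blast
  moreover have "eventually (\<lambda>t::real. f (u*t) (v*t) / t^m = K) at_top"
    using eventually_gt_at_top[of "0::real"] by eventually_elim (simp add: assms(3))
  ultimately have "((\<lambda>t::real. K) \<longlongrightarrow> 0) at_top"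
    using Lim_transform_eventually by fastforce
  then show ?thesis by (simp add: tendsto_const_iff)
qed

lemma tdeg_bideg:
  assumes "poly_bideg a b f" "a + b \<le> r"
  shows "poly_tdeg r f"
proof -
  obtain c where c: "\<forall>x y. f x y = (\<Sum>i\<le>a. \<Sum>j\<le>b. c i j * x ^ i * y ^ j)"
    using assms unfolding poly_bideg_def by blast
  define d where "d i j = (if i \<le> a \<and> j \<le> b then c i j else 0)" for i j
  have "f x y = (\<Sum>i\<le>r. \<Sum>j\<le>r - i. d i j * x ^ i * y ^ j)" for x y
  proof -
    have "(\<Sum>i\<le>r. \<Sum>j\<le>r - i. d i j * x ^ i * y ^ j) = (\<Sum>i\<le>r. \<Sum>j\<le>b. d i j * x ^ i * y ^ j)"
    proof (rule sum.cong[OF refl])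
      fix i assume i: "i \<in> {..r}"
      show "(\<Sum>j\<le>r - i. d i j * x ^ i * y ^ j) = (\<Sum>j\<le>b. d i j * x ^ i * y ^ j)"
      proof (cases "i \<le> a")
        case True
        then have "{..b} \<subseteq> {..r-i}" using assms by auto
        then show ?thesis
          by (intro sum.mono_neutral_right) (auto simp: d_def)
      next
        case False then show ?thesis by (simp add: d_def)
      qed
    qed
    also have "\<dots> = (\<Sum>i\<le>a. \<Sum>j\<le>b. d i j * x ^ i * y ^ j)"
      using assms by (intro sum.mono_neutral_right) (auto simp: d_def)
    also have "\<dots> = f x y" by (simp add: c d_def)
    finally show ?thesis by simp
  qed
  then show ?thesis unfolding poly_tdeg_def by blast
qed

theorem mainTheorem9:
  fixes r s :: nat
  assumes "r \<ge> 1" and "s \<ge> 1"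
  shows "Qminus_forms s \<subseteq> S_forms r \<longleftrightarrow> 2 * s - 1 \<le> r"
proof
  assume le: "2 * s - 1 \<le> r"
  show "Qminus_forms s \<subseteq> S_forms r"
  proof
    fix w assume "w \<in> Qminus_forms s"
    then obtain p q where w: "w = (p, q)" "poly_bideg (s - 1) s p" "poly_bideg s (s - 1) q"
      unfolding Qminus_forms_def by auto
    have "poly_tdeg r p" "poly_tdeg r q"
      using w le assms by (auto intro!: tdeg_bideg)
    then have "(\<lambda>x y. p x y - 0 * (real r + 1) * x ^ r * y - 0 * y ^ (r + 1),
       \<lambda>x y. q x y - 0 * x ^ (r + 1) - 0 * (real r + 1) * x * y ^ r) \<in> P_forms r"
      by (simp add: P_forms_def)
    then show "w \<in> S_forms r" unfolding S_forms_def w by blast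
  qed
next
  assume sub: "Qminus_forms s \<subseteq> S_forms r"
  show "2 * s - 1 \<le> r"
  proof (rule ccontr)
    assume "\<not> 2 * s - 1 \<le> r"
    then have gt: "r < 2 * s - 1" by simp
    define p :: "real \<Rightarrow> real \<Rightarrow> real" where "p x y = x^(s-1) * y^s" for x y
    define q :: "real \<Rightarrow> real \<Rightarrow> real" where "q x y = 0" for x y
    have "poly_bideg (s - 1) s p" unfolding poly_bideg_def
    proof (rule exI[of _ "\<lambda>i j. if i = s - 1 \<and> j = s then 1 else 0"], intro allI)
      fix x y :: real
      have "(\<Sum>i\<le>s - 1. \<Sum>j\<le>s. (if i = s - 1 \<and> j = s then 1 else 0) * x ^ i * y ^ j)
          = (\<Sum>i\<le>s - 1. if i = s - 1 then x^i * y^s else 0)"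
        by (intro sum.cong refl) (auto simp: if_distrib if_distribR sum.delta' cong: if_cong)
      also have "\<dots> = p x y" by (simp add: p_def)
      finally show "p x y = (\<Sum>i\<le>s - 1. \<Sum>j\<le>s. (if i = s - 1 \<and> j = s then 1 else 0) * x ^ i * y ^ j)" by simp
    qed
    moreover have "poly_bideg s (s - 1) q" unfolding poly_bideg_def q_def
      by (rule exI[of _ "\<lambda>i j. 0"]) simp
    ultimately have "(p, q) \<in> Qminus_forms s" unfolding Qminus_forms_def by simp
    with sub obtain a b :: real where ab:
      "poly_tdeg r (\<lambda>x y. p x y - a * (real r + 1) * x ^ r * y - b * y ^ (r + 1))"
      "poly_tdeg r (\<lambda>x y. q x y - a * x ^ (r + 1) - b * (real r + 1) * x * y ^ r)"
      unfolding S_forms_def P_forms_def by auto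
    have "-a = 0"
      by (rule tdeg_const[OF ab(2), of "r+1" 1 0]) (use assms in \<open>auto simp: q_def power_mult_distrib\<close>)
    then have a0: "a = 0" by simp
    have "-(b * (real r + 1)) = 0"
      by (rule tdeg_const[OF ab(2), of "r+1" 1 1]) (auto simp: q_def a0 power_Suc[symmetric] simp del: power_Suc)
    then have b0: "b = 0" by simp
    have "1 = (0::real)"
      by (rule tdeg_const[OF ab(1), of "2*s-1" 1 1]) (use gt assms in \<open>auto simp: p_def a0 b0 power_add[symmetric] mult_2\<close>)
    then show False by simp
  qed
qed

end
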